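(* Let $a,b\in\mathbb{R}$ with $a<b$, let $n\in\mathbb{N}$ with $n\ge2$, and let $q\ge1$. Then $$\left|A(a^n,b^n)-L_n^n(a,b)\right|\le \frac{n(n-1)(b-a)^2}{4}\left(\frac{2}{(q+1)(q+2)}\right)^{\frac1q}\left(\max\{|a|^{(n-2)q},|b|^{(n-2)q}\}\right)^{\frac1q}.$$
   Context: $A(x,y)=\frac{x+y}{2}$ (arithmetic mean). For $a\ne b$ and $n\in\mathbb{Z}\setminus\{-1,0\}$, $L_n(a,b)=\left[\frac{b^{n+1}-a^{n+1}}{(n+1)(b-a)}\right]^{1/n}$ (generalized logarithmic mean), so $L_n^n(a,b)=\frac{b^{n+1}-a^{n+1}}{(n+1)(b-a)}$. *)

theory Defs
  imports Complex_Main
begin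

definition AM :: "real \<Rightarrow> real \<Rightarrow> real" where
  "AM x y = (x + y) / 2"

text \<open>The n-th power of the generalized logarithmic mean, for a \<noteq> b:
  L_n^n(a,b) = (b^(n+1) - a^(n+1)) / ((n+1)(b-a)).\<close>
definition Ln_pow :: "nat \<Rightarrow> real \<Rightarrow> real \<Rightarrow> real" where
  "Ln_pow n a b = (b ^ (n + 1) - a ^ (n + 1)) / ((real n + 1) * (b - a))"

end

theory Submission
  imports Defs
begin

lemma two_step:
  fixes G Gd Gdd :: "real \<Rightarrow> real" and a b :: real
  assumes ab: "a \<le> b"
    and d1: "\<And>x. (G has_real_derivative Gd x) (at x)"
    and d2: "\<And>x. (Gd has_real_derivative Gdd x) (at x)"
    and p: "\<And>x. a \<le> x \<Longrightarrow> x \<le> b \<Longrightarrow> Gdd x \<ge> 0"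
    and z: "G a = 0" "Gd a = 0"
  shows "G b \<ge> 0"
proof -
  have c1: "continuous_on S Gd" for S using d2
    by (meson DERIV_isCont continuous_at_imp_continuous_on)
  have c0: "continuous_on S G" for S using d1
    by (meson DERIV_isCont continuous_at_imp_continuous_on)
  have g1: "Gd x \<ge> 0" if "a \<le> x" "x \<le> b" for x
  proof -
    have "Gd a \<le> Gd x"
    proof (rule DERIV_nonneg_imp_increasing_open[OF that(1)])
      fix y assume "a < y" "y < x"
      then show "\<exists>z. (Gd has_real_derivative z) (at y) \<and> z \<ge> 0"
        using d2 p that by (intro exI[of _ "Gdd y"]) auto
    qed (rule c1)
    with z show ?thesis by simp
  qed
  have "G a \<le> G b"
  proof (rule DERIV_nonneg_imp_increasing_open[OF ab])
    fix y assume "a < y" "y < b"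
    then show "\<exists>z. (G has_real_derivative z) (at y) \<and> z \<ge> 0"
      using d1 g1 by (intro exI[of _ "Gd y"]) auto
  qed (rule c0)
  with z show ?thesis by simp
qed

lemma three_pow: fixes q :: real assumes "q \<ge> 1"
  shows "(q+1)*(q+2) \<le> 2 * 3 powr q"
proof -
  define t where "t = q - 1"
  have t: "t \<ge> 0" using assms t_def by simp
  have L: "ln 3 \<ge> (1::real)" using exp_le by (simp add: ln_ge_iff)
  have "3 powr q = 3 * 3 powr t" by (simp add: t_def powr_diff)
  moreover have "3 powr t = exp (t * ln 3)" by (simp add: powr_def)
  moreover have "exp (t * ln 3) \<ge> exp t" using L t by (simp add: mult_left_mono[of 1 "ln 3" t, simplified])
  ultimately have A: "3 powr q \<ge> 3 * exp t" by simp
  have "exp t = exp (t/2) ^ 2" by (simp add: exp_double[symmetric] power2_eq_square flip: exp_add)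
  also have "\<dots> \<ge> (1 + t/2)^2" using t by (intro power_mono) auto
  finally have "exp t \<ge> (1+t/2)^2" .
  with A have "3 powr q \<ge> 3 * (1+t/2)^2" by linarith
  moreover have "(q+1)*(q+2) \<le> 6 * (1+t/2)^2"
  proof -
    have h: "1 \<le> q*q" using mult_mono[of 1 q 1 q] assms by simp
    then show ?thesis unfolding t_def by (simp add: power2_eq_square algebra_simps divide_simps)
  qed
  ultimately show ?thesis by linarith
qed


lemma trap:
  fixes a b :: real and m :: nat
  assumes ab: "a < b"
  defines "n \<equiv> Suc (Suc m)"
  defines "M \<equiv> max \<bar>a\<bar> \<bar>b\<bar> ^ m"
  shows "\<bar>(a^n + b^n)/2 - (b^(n+1) - a^(n+1)) / ((real n + 1)*(b-a))\<bar>
         \<le> real n * (real n - 1) * (b-a)^2 * M / 12"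
proof -
  define K where "K = real n * (real n - 1) * M"
  define E where "E x = (x-a)*(a^n + x^n)/2 - (x^(n+1) - a^(n+1))/(real n + 1)" for x
  define E1 where "E1 x = (a^n + x^n)/2 + (x-a)*(real n * x^(Suc m))/2 - x^n" for x
  define E2 where "E2 x = (x-a)*(real n * (real n - 1) * x^m)/2" for x
  have dE: "(E has_real_derivative E1 x) (at x)" for x
    unfolding E_def E1_def n_def
    by ((rule derivative_eq_intros refl | simp)+, (simp add: field_simps)?)
  have dE1: "(E1 has_real_derivative E2 x) (at x)" for x
    unfolding E2_def E1_def n_def
    by ((rule derivative_eq_intros refl | simp)+, (simp add: field_simps)?)
  have bnd: "\<bar>E2 x\<bar> \<le> K * (x-a)/2" if "a \<le> x" "x \<le> b" for x
  proof -
    have "\<bar>x\<bar> \<le> max \<bar>a\<bar> \<bar>b\<bar>" using that by auto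
    then have xm: "\<bar>x\<bar>^m \<le> M" unfolding M_def by (intro power_mono) auto
    have nn: "real n * (real n - 1) \<ge> 0" unfolding n_def by simp
    have n1: "real n - 1 \<ge> 0" unfolding n_def by simp
    have "\<bar>E2 x\<bar> = (x-a) * (real n * (real n - 1)) * \<bar>x\<bar>^m / 2"
      unfolding E2_def using that nn n1 by (simp add: abs_mult power_abs)
    also have "\<dots> \<le> (x-a) * (real n * (real n - 1)) * M / 2"
      using that nn xm by (intro divide_right_mono mult_left_mono) auto
    finally show ?thesis unfolding K_def by (simp add: algebra_simps)
  qed
  have up: "E b \<le> K*(b-a)^3/12"
  proof -
    have "0 \<le> (\<lambda>x. K*(x-a)^3/12 - E x) b"
    proof (rule two_step[where a=a and b=b and G="\<lambda>x. K*(x-a)^3/12 - E x" and Gd = "\<lambda>x. K*(x-a)^2/4 - E1 x" and Gdd = "\<lambda>x. K*(x-a)/2 - E2 x"])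
      show "a \<le> b" using ab by simp
      show "((\<lambda>x. K*(x-a)^3/12 - E x) has_real_derivative K*(x-a)^2/4 - E1 x) (at x)" for x
        by ((rule derivative_eq_intros dE refl | simp)+, (simp add: field_simps)?)
      show "((\<lambda>x. K*(x-a)^2/4 - E1 x) has_real_derivative K*(x-a)/2 - E2 x) (at x)" for x
        by ((rule derivative_eq_intros dE1 refl | simp)+, (simp add: field_simps)?)
      show "0 \<le> K*(x-a)/2 - E2 x" if "a \<le> x" "x \<le> b" for x using bnd[OF that] by auto
    qed (auto simp: E_def E1_def)
    then show ?thesis by simp
  qed
  have lo: "- E b \<le> K*(b-a)^3/12"
  proof -
    have "0 \<le> (\<lambda>x. K*(x-a)^3/12 + E x) b"
    proof (rule two_step[where a=a and b=b and G="\<lambda>x. K*(x-a)^3/12 + E x" and Gd = "\<lambda>x. K*(x-a)^2/4 + E1 x" and Gdd = "\<lambda>x. K*(x-a)/2 + E2 x"])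
      show "a \<le> b" using ab by simp
      show "((\<lambda>x. K*(x-a)^3/12 + E x) has_real_derivative K*(x-a)^2/4 + E1 x) (at x)" for x
        by ((rule derivative_eq_intros dE refl | simp)+, (simp add: field_simps)?)
      show "((\<lambda>x. K*(x-a)^2/4 + E1 x) has_real_derivative K*(x-a)/2 + E2 x) (at x)" for x
        by ((rule derivative_eq_intros dE1 refl | simp)+, (simp add: field_simps)?)
      show "0 \<le> K*(x-a)/2 + E2 x" if "a \<le> x" "x \<le> b" for x using bnd[OF that] by auto
    qed (auto simp: E_def E1_def)
    then show ?thesis by simp
  qed
  have eq: "(a^n + b^n)/2 - (b^(n+1) - a^(n+1)) / ((real n + 1)*(b-a)) = E b / (b-a)"
  proof -
    have ne: "b - a \<noteq> 0" using ab by simp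
    have "E b / (b-a) = ((b-a)*(a^n+b^n)/2)/(b-a) - ((b^(n+1) - a^(n+1))/(real n + 1))/(b-a)"
      unfolding E_def by (simp add: diff_divide_distrib)
    also have "\<dots> = (a^n + b^n)/2 - (b^(n+1) - a^(n+1)) / ((real n + 1)*(b-a))"
    proof -
      have "((b-a)*(a^n+b^n)/2)/(b-a) = (a^n + b^n)/2" using ne by (simp add: field_simps)
      moreover have "((b^(n+1) - a^(n+1))/(real n + 1))/(b-a) = (b^(n+1) - a^(n+1)) / ((real n + 1)*(b-a))"
        by (simp add: divide_divide_eq_left)
      ultimately show ?thesis by simp
    qed
    finally show ?thesis by simp
  qed
  have "\<bar>E b\<bar> \<le> K*(b-a)^3/12" using up lo by auto
  then have "\<bar>E b\<bar> / (b-a) \<le> K*(b-a)^3/12 / (b-a)" using ab by (intro divide_right_mono) auto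
  also have "\<dots> = K*(b-a)^2/12"
  proof -
    have ne: "b - a \<noteq> 0" using ab by simp
    show ?thesis using ne by (subst nonzero_divide_eq_eq) (simp_all add: power3_eq_cube power2_eq_square)
  qed
  finally show ?thesis unfolding eq K_def using ab by (simp add: abs_div mult_ac)
qed


lemma Cbound: fixes q :: real assumes q: "q \<ge> 1"
  shows "(2 / ((q + 1) * (q + 2))) powr (1 / q) \<ge> 1/3"
proof -
  have pos: "(q+1)*(q+2) > 0" using q by simp
  have "3 powr (-q) \<le> 2 / ((q + 1) * (q + 2))"
    using three_pow[OF q] pos by (simp add: powr_minus divide_simps mult.commute)
  then have "(3 powr (-q)) powr (1/q) \<le> (2 / ((q + 1) * (q + 2))) powr (1/q)"
    using q by (intro powr_mono2) auto
  moreover have "(3 powr (-q)) powr (1/q) = 3 powr (-1)" using q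
    by (simp add: powr_powr)
  moreover have "(3::real) powr (-1) = 1/3" by (simp add: powr_minus)
  ultimately show ?thesis by simp
qed

lemma maxpow: fixes x y q :: real and m :: nat assumes "q \<ge> 1"
  shows "(max ((\<bar>x\<bar> ^ m) powr q) ((\<bar>y\<bar> ^ m) powr q)) powr (1 / q) = max \<bar>x\<bar> \<bar>y\<bar> ^ m"
proof -
  have "max ((\<bar>x\<bar> ^ m) powr q) ((\<bar>y\<bar> ^ m) powr q) = (max (\<bar>x\<bar> ^ m) (\<bar>y\<bar> ^ m)) powr q"
  proof (cases "\<bar>x\<bar>^m \<le> \<bar>y\<bar>^m")
    case True
    then have "(\<bar>x\<bar> ^ m) powr q \<le> (\<bar>y\<bar> ^ m) powr q" using assms by (intro powr_mono2) auto
    then show ?thesis using True by (simp add: max_def)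
  next
    case False
    then have "(\<bar>y\<bar> ^ m) powr q \<le> (\<bar>x\<bar> ^ m) powr q" using assms by (intro powr_mono2) auto
    then show ?thesis using False by (simp add: max_def)
  qed
  moreover have "max (\<bar>x\<bar> ^ m) (\<bar>y\<bar> ^ m) = max \<bar>x\<bar> \<bar>y\<bar> ^ m"
  proof (cases "\<bar>x\<bar> \<le> \<bar>y\<bar>")
    case True
    then have "\<bar>x\<bar>^m \<le> \<bar>y\<bar>^m" by (intro power_mono) auto
    then show ?thesis using True by (simp add: max_def)
  next
    case False
    then have "\<bar>y\<bar>^m \<le> \<bar>x\<bar>^m" by (intro power_mono) auto
    then show ?thesis using False by (simp add: max_def)
  qed
  moreover have "max \<bar>x\<bar> \<bar>y\<bar> ^ m \<ge> 0" by simp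
  ultimately show ?thesis using assms by (simp add: powr_powr)
qed

theorem proposition6:
  fixes a b q :: real and n :: nat
  assumes "a < b" and "n \<ge> 2" and "q \<ge> 1"
  shows "\<bar>AM (a ^ n) (b ^ n) - Ln_pow n a b\<bar>
    \<le> real n * (real n - 1) * (b - a)^2 / 4
       * (2 / ((q + 1) * (q + 2))) powr (1 / q)
       * (max ((\<bar>a\<bar> ^ (n - 2)) powr q) ((\<bar>b\<bar> ^ (n - 2)) powr q)) powr (1 / q)"
proof -
  obtain m where nm: "n = Suc (Suc m)" using assms(2) by (metis add_2_eq_Suc le_Suc_ex)
  define M where "M = max \<bar>a\<bar> \<bar>b\<bar> ^ m"
  define C where "C = (2 / ((q + 1) * (q + 2))) powr (1 / q)"
  have n2: "n - 2 = m" using nm by simp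
  have mx: "(max ((\<bar>a\<bar> ^ (n - 2)) powr q) ((\<bar>b\<bar> ^ (n - 2)) powr q)) powr (1 / q) = M"
    unfolding n2 M_def by (rule maxpow[OF assms(3)])
  have T: "\<bar>AM (a ^ n) (b ^ n) - Ln_pow n a b\<bar> \<le> real n * (real n - 1) * (b-a)^2 * M / 12"
    using trap[OF assms(1), of m] unfolding AM_def Ln_pow_def nm M_def by simp
  have C3: "C \<ge> 1/3" unfolding C_def by (rule Cbound[OF assms(3)])
  have P: "real n * (real n - 1) * (b-a)^2 * M \<ge> 0" using nm unfolding M_def by simp
  have "real n * (real n - 1) * (b-a)^2 * M / 12 = (real n * (real n - 1) * (b-a)^2 * M / 4) * (1/3)" by simp
  also have "\<dots> \<le> (real n * (real n - 1) * (b-a)^2 * M / 4) * C"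
    using P C3 by (intro mult_left_mono) auto
  finally show ?thesis using T unfolding mx C_def[symmetric] by (simp add: mult_ac)
qed

end
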